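(* Let $\alpha,\beta,\gamma,x$ be non-negative integers with $(\alpha,\beta,\gamma,x)\neq(0,0,0,0)$. Then for every integer $n\ge0$, $$T_{n+1}^{1,x}(\alpha,\beta,\gamma)=\gamma\,T_n^{1,x}(\alpha,\beta,\gamma-\alpha)+x\beta\sum_{k=0}^{n}\binom{n}{k}T_k^{1,x}(\alpha,\beta,\gamma+\beta-\alpha)\,T_{n-k}^{1,x}(\alpha,\beta,0).$$
   Context: For complex numbers $c,\alpha$ and an integer $n\ge 0$ let $(c|\alpha)_n=\prod_{i=0}^{n-1}(c-i\alpha)$, with $(c|\alpha)_0=1$. Let $E_{\alpha,c}(t)=\sum_{n\ge 0}(c|\alpha)_n\,t^n/n!$, viewed as a formal power series in $t$. It equals $(1+\alpha t)^{c/\alpha}$ if $\alpha\neq0$ and $e^{ct}$ if $\alpha=0$. For complex $\alpha,\beta,\gamma,x$ and a non-negative integer $\lambda$, the numbers $T_n^{\lambda,x}(\alpha,\beta,\gamma)$, $n\ge0$, are defined by the formal power series identity $$\sum_{n\ge0}T_n^{\lambda,x}(\alpha,\beta,\gamma)\frac{t^n}{n!}=E_{\alpha,\gamma}(t)\,\bigl(1-x(E_{\alpha,\beta}(t)-1)\bigr)^{-\lambda}.$$ The third argument may be any complex number. *)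

theory Defs
  imports Complex_Main "HOL-Computational_Algebra.Formal_Power_Series"
begin

definition gfall :: "complex \<Rightarrow> complex \<Rightarrow> nat \<Rightarrow> complex" where
  "gfall c \<alpha> n = (\<Prod>i<n. c - of_nat i * \<alpha>)"

definition Efps :: "complex \<Rightarrow> complex \<Rightarrow> complex fps" where
  "Efps \<alpha> c = Abs_fps (\<lambda>n. gfall c \<alpha> n / fact n)"

text \<open>The base has constant term 1, so its inverse is the usual fps inverse.\<close>
definition Tgf :: "nat \<Rightarrow> complex \<Rightarrow> complex \<Rightarrow> complex \<Rightarrow> complex \<Rightarrow> complex fps" where
  "Tgf lam x \<alpha> \<beta> \<gamma> = Efps \<alpha> \<gamma> * inverse ((1 - fps_const x * (Efps \<alpha> \<beta> - 1)) ^ lam)"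

definition T :: "nat \<Rightarrow> complex \<Rightarrow> nat \<Rightarrow> complex \<Rightarrow> complex \<Rightarrow> complex \<Rightarrow> complex" where
  "T lam x n \<alpha> \<beta> \<gamma> = fact n * fps_nth (Tgf lam x \<alpha> \<beta> \<gamma>) n"

end

theory Submission
  imports Defs
begin

unbundle fps_syntax

lemma gfall_Suc: "gfall c a (Suc n) = c * gfall (c - a) a n"
  unfolding gfall_def prod.lessThan_Suc_shift by (simp add: algebra_simps)

lemma gfall_0_Suc: "gfall 0 a (Suc n) = 0"
  unfolding gfall_def prod.lessThan_Suc_shift by simp

lemma Efps_0: "Efps a 0 = 1"
  unfolding Efps_def by (rule fps_ext) (auto simp: gfall_def split: nat.splits)

lemma Efps_nth0: "Efps a c $ 0 = 1"
  unfolding Efps_def by (simp add: gfall_def)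

lemma Efps_deriv: "fps_deriv (Efps a c) = fps_const c * Efps a (c - a)"
proof (rule fps_ext)
  fix n
  have "fps_deriv (Efps a c) $ n = of_nat (n+1) * (gfall c a (Suc n) / fact (Suc n))"
    by (simp add: Efps_def)
  also have "\<dots> = c * (gfall (c - a) a n / fact n)"
    by (simp add: gfall_Suc field_simps del: of_nat_Suc)
  finally show "fps_deriv (Efps a c) $ n = (fps_const c * Efps a (c - a)) $ n"
    by (simp add: Efps_def)
qed

lemma Efps_mult_nth: "\<forall>b c. (Efps a b * Efps a c) $ n = Efps a (b + c) $ n"
proof (induction n)
  case 0
  then show ?case by (simp add: Efps_nth0)
next
  case (Suc n)
  show ?case
  proof (intro allI)
    fix b c
    have "of_nat (Suc n) * (Efps a b * Efps a c) $ Suc n = fps_deriv (Efps a b * Efps a c) $ n"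
      by (simp only: fps_deriv_nth Suc_eq_plus1)
    also have "\<dots> = c * (Efps a b * Efps a (c - a)) $ n + b * (Efps a (b - a) * Efps a c) $ n"
      by (simp add: Efps_deriv mult.assoc mult.left_commute[of _ "fps_const c"])
    also have "\<dots> = c * Efps a (b + c - a) $ n + b * Efps a (b + c - a) $ n"
      using Suc.IH by (simp add: algebra_simps)
    also have "\<dots> = fps_deriv (Efps a (b + c)) $ n"
      by (simp add: Efps_deriv algebra_simps)
    also have "\<dots> = of_nat (Suc n) * Efps a (b + c) $ Suc n" by simp
    finally show "(Efps a b * Efps a c) $ Suc n = Efps a (b + c) $ Suc n"
      by (metis mult_cancel_left of_nat_eq_0_iff nat.distinct(1))
  qed
qed

lemma Efps_mult: "Efps a b * Efps a c = Efps a (b + c)"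
  using Efps_mult_nth by (intro fps_ext) blast

lemma main_fps:
  fixes x a b g :: complex
  defines "D \<equiv> 1 - fps_const x * (Efps a b - 1)"
  shows "fps_deriv (Tgf 1 x a b g) = fps_const g * Tgf 1 x a b (g - a)
     + fps_const (x * b) * (Tgf 1 x a b (g + b - a) * Tgf 1 x a b 0)"
proof -
  have D0: "D $ 0 \<noteq> 0" by (simp add: D_def Efps_nth0)
  have dD: "fps_deriv D = - (fps_const x * (fps_const b * Efps a (b - a)))"
    by (simp add: D_def Efps_deriv)
  have T: "Tgf 1 x a b c = Efps a c * inverse D" for c
    by (simp add: Tgf_def D_def)
  have "fps_deriv (Tgf 1 x a b g) = fps_const g * Efps a (g - a) * inverse D
     + Efps a g * (fps_const (x*b) * Efps a (b - a) * (inverse D)^2)"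
    unfolding T by (simp add: fps_inverse_deriv[OF D0] dD Efps_deriv algebra_simps fps_const_mult)
  also have "Efps a g * (fps_const (x*b) * Efps a (b - a) * (inverse D)^2)
      = fps_const (x*b) * ((Efps a g * Efps a (b - a)) * inverse D * (Efps a 0 * inverse D))"
    by (simp add: Efps_0 power2_eq_square algebra_simps)
  also have "Efps a g * Efps a (b - a) = Efps a (g + b - a)"
    by (simp add: Efps_mult algebra_simps)
  finally show ?thesis unfolding T by (simp add: algebra_simps)
qed

lemma main:
  fixes x a b g :: complex
  shows "T 1 x (Suc n) a b g = g * T 1 x n a b (g - a)
     + x * b * (\<Sum>k=0..n. of_nat (n choose k) * T 1 x k a b (g + b - a) * T 1 x (n - k) a b 0)"
proof -
  let ?F = "Tgf 1 x a b"
  have "T 1 x (Suc n) a b g = fact n * (of_nat (Suc n) * ?F g $ Suc n)"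
    by (simp add: T_def algebra_simps del: of_nat_Suc)
  also have "\<dots> = fact n * fps_deriv (?F g) $ n"
    by (simp only: fps_deriv_nth Suc_eq_plus1)
  also have "\<dots> = fact n * (g * ?F (g - a) $ n + x * b * (\<Sum>k=0..n. ?F (g + b - a) $ k * ?F 0 $ (n - k)))"
    unfolding main_fps fps_add_nth fps_mult_left_const_nth fps_mult_nth[of "?F (g + b - a)"] ..
  also have "\<dots> = g * T 1 x n a b (g - a) + x * b * (\<Sum>k=0..n. fact n * (?F (g + b - a) $ k * ?F 0 $ (n - k)))"
    by (simp add: T_def algebra_simps sum_distrib_left)
  also have "(\<Sum>k=0..n. fact n * (?F (g + b - a) $ k * ?F 0 $ (n - k)))
     = (\<Sum>k=0..n. of_nat (n choose k) * T 1 x k a b (g + b - a) * T 1 x (n - k) a b 0)"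
  proof (rule sum.cong)
    fix k assume "k \<in> {0..n}"
    hence kn: "k \<le> n" by simp
    show "fact n * (?F (g + b - a) $ k * ?F 0 $ (n - k))
       = of_nat (n choose k) * T 1 x k a b (g + b - a) * T 1 x (n - k) a b 0"
      by (simp add: T_def binomial_fact[OF kn] field_simps)
  qed simp
  finally show ?thesis .
qed

theorem theorem4:
  fixes \<alpha> \<beta> \<gamma> x :: nat and n :: nat
  assumes "(\<alpha>, \<beta>, \<gamma>, x) \<noteq> (0, 0, 0, 0)"
  shows "T 1 (of_nat x) (Suc n) (of_nat \<alpha>) (of_nat \<beta>) (of_nat \<gamma>)
    = of_nat \<gamma> * T 1 (of_nat x) n (of_nat \<alpha>) (of_nat \<beta>) (of_nat \<gamma> - of_nat \<alpha>)
      + of_nat x * of_nat \<beta> *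
        (\<Sum>k=0..n. of_nat (n choose k)
           * T 1 (of_nat x) k (of_nat \<alpha>) (of_nat \<beta>) (of_nat \<gamma> + of_nat \<beta> - of_nat \<alpha>)
           * T 1 (of_nat x) (n - k) (of_nat \<alpha>) (of_nat \<beta>) 0)"
  by (rule main)

end
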